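(* For the discrete-time Glauber dynamics for the ferromagnetic Ising model (with zero external field) on any finite graph with nonnegative interaction strengths, $t_{\mathrm{mix}}^+\ \ge\ \log 2\cdot(\mathtt{gap}^{-1}-1)$.
   Context: Let $G=(V,E)$ be a finite graph and $J=\{J_{uv}\ge0:uv\in E\}$. The Ising measure on $\{\pm1\}^V$ is $\mu(\sigma)=Z^{-1}\exp(\sum_{uv\in E}J_{uv}\sigma(u)\sigma(v))$. Glauber dynamics: at each step pick a uniform vertex $v$ and resample $\sigma(v)$ from its conditional law under $\mu$ given all other spins. $\mathtt{gap}=1-\lambda$, where $\lambda$ is the second largest eigenvalue of the transition kernel. $t_{\mathrm{mix}}^+=\min\{t:\|\mathbb P_+(X_t\in\cdot)-\mu\|_{TV}\le1/4\}$, where $\mathbb P_+$ refers to the chain started at the all-plus configuration and $\|\cdot\|_{TV}$ is total variation distance. *)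

theory Defs
  imports "Jordan_Normal_Form.Char_Poly" "HOL-Library.Multiset"
begin

text \<open>Vertices are 0,...,n-1. A spin configuration sigma in {+1,-1}^V is encoded by a
  natural number s < 2^n: the spin of vertex v is +1 iff bit v of s is set.\<close>

definition spin :: "nat \<Rightarrow> nat \<Rightarrow> real" where
  "spin s v = (if bit s v then 1 else -1)"

definition graph_edges :: "nat \<Rightarrow> nat set set" where
  "graph_edges n = {{u, v} | u v. u < n \<and> v < n \<and> u \<noteq> v}"

definition ising_weight :: "nat set set \<Rightarrow> (nat set \<Rightarrow> real) \<Rightarrow> nat \<Rightarrow> real" where
  "ising_weight E J s = exp (\<Sum>e\<in>E. J e * (\<Prod>v\<in>e. spin s v))"

definition ising_mu :: "nat \<Rightarrow> nat set set \<Rightarrow> (nat set \<Rightarrow> real) \<Rightarrow> nat \<Rightarrow> real" where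
  "ising_mu n E J s = ising_weight E J s / (\<Sum>t<2^n. ising_weight E J t)"

text \<open>Glauber transition probability from s to t: pick a uniform vertex v and resample
  the spin at v from its conditional law under mu given all other spins.\<close>
definition glauber :: "nat \<Rightarrow> nat set set \<Rightarrow> (nat set \<Rightarrow> real) \<Rightarrow> nat \<Rightarrow> nat \<Rightarrow> real" where
  "glauber n E J s t = (1 / real n) * (\<Sum>v<n.
      (if (\<forall>w<n. w \<noteq> v \<longrightarrow> (bit t w \<longleftrightarrow> bit s w))
       then ising_mu n E J t / (ising_mu n E J (set_bit v s) + ising_mu n E J (unset_bit v s))
       else 0))"

definition glauber_mat :: "nat \<Rightarrow> nat set set \<Rightarrow> (nat set \<Rightarrow> real) \<Rightarrow> real mat" where
  "glauber_mat n E J = mat (2^n) (2^n) (\<lambda>(s, t). glauber n E J s t)"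

text \<open>Second largest eigenvalue, eigenvalues counted with (algebraic) multiplicity.\<close>
definition second_largest_eigenvalue :: "real mat \<Rightarrow> real" where
  "second_largest_eigenvalue A = rev (sorted_list_of_multiset (proots (char_poly A))) ! 1"

definition spectral_gap :: "nat \<Rightarrow> nat set set \<Rightarrow> (nat set \<Rightarrow> real) \<Rightarrow> real" where
  "spectral_gap n E J = 1 - second_largest_eigenvalue (glauber_mat n E J)"

definition all_plus :: "nat \<Rightarrow> nat" where
  "all_plus n = 2^n - 1"

definition tv_from_plus :: "nat \<Rightarrow> nat set set \<Rightarrow> (nat set \<Rightarrow> real) \<Rightarrow> nat \<Rightarrow> real" where
  "tv_from_plus n E J t = (1/2) * (\<Sum>s<2^n.
      \<bar>(glauber_mat n E J ^\<^sub>m t) $$ (all_plus n, s) - ising_mu n E J s\<bar>)"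

definition tmix_plus :: "nat \<Rightarrow> nat set set \<Rightarrow> (nat set \<Rightarrow> real) \<Rightarrow> nat" where
  "tmix_plus n E J = (LEAST t. tv_from_plus n E J t \<le> 1/4)"

end

theory Submission
  imports Defs
begin

definition cle :: "nat \<Rightarrow> nat \<Rightarrow> nat \<Rightarrow> bool" where
  "cle n x y = (\<forall>v<n. bit x v \<longrightarrow> bit y v)"

definition incr :: "nat \<Rightarrow> (nat \<Rightarrow> real) \<Rightarrow> bool" where
  "incr n h = (\<forall>x<2^n. \<forall>y<2^n. cle n x y \<longrightarrow> h x \<le> h y)"

definition flp :: "nat \<Rightarrow> nat \<Rightarrow> nat" where "flp n s = xor s (mask n)"

lemma lt_pow_bits: "(s::nat) < 2^n \<longleftrightarrow> (\<forall>w. bit s w \<longrightarrow> w < n)"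
proof
  assume "s < 2^n"
  then have "take_bit n s = s" by (simp add: take_bit_nat_eq_self)
  then show "\<forall>w. bit s w \<longrightarrow> w < n" by (metis bit_take_bit_iff)
next
  assume H: "\<forall>w. bit s w \<longrightarrow> w < n"
  have "take_bit n s = s" by (rule bit_eqI) (use H in \<open>auto simp: bit_take_bit_iff\<close>)
  then show "s < 2^n" by (metis take_bit_nat_eq_self_iff)
qed

lemma bits_eq: "(x::nat) < 2^n \<Longrightarrow> y < 2^n \<Longrightarrow> (\<forall>w<n. bit x w = bit y w) \<Longrightarrow> x = y"
  by (rule bit_eqI) (metis lt_pow_bits)

lemma set_bit_lt: "v < n \<Longrightarrow> (s::nat) < 2^n \<Longrightarrow> set_bit v s < 2^n"
  by (auto simp: lt_pow_bits bit_set_bit_iff)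
lemma unset_bit_lt: "(s::nat) < 2^n \<Longrightarrow> unset_bit v s < 2^n"
  by (auto simp: lt_pow_bits bit_unset_bit_iff)

lemma bit_flp: "bit (flp n s) w = (bit s w \<noteq> (w < n))"
  by (simp add: flp_def bit_xor_iff bit_mask_iff)
lemma flp_lt: "s < 2^n \<Longrightarrow> flp n s < 2^n"
  by (auto simp: lt_pow_bits bit_flp)
lemma flp_flp[simp]: "flp n (flp n s) = s"
  by (rule bit_eqI) (auto simp: bit_flp)
lemma all_plus_mask: "all_plus n = mask n"
  by (simp add: all_plus_def mask_eq_exp_minus_1)
lemma bit_all_plus: "bit (all_plus n) w = (w<n)"
  by (simp add: all_plus_mask bit_mask_iff)
lemma all_plus_lt: "all_plus n < 2^n"
  by (simp add: all_plus_def)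
lemma flp_all_plus: "flp n (all_plus n) = 0"
  by (rule bit_eqI) (simp add: bit_flp bit_all_plus)
lemma cle_0: "cle n 0 x" by (simp add: cle_def)
lemma cle_top: "cle n x (all_plus n)" by (simp add: cle_def bit_all_plus)
lemma flp_set_bit: "v<n \<Longrightarrow> flp n (set_bit v s) = unset_bit v (flp n s)"
  by (rule bit_eqI) (auto simp: bit_flp bit_set_bit_iff bit_unset_bit_iff)
lemma flp_unset_bit: "v<n \<Longrightarrow> flp n (unset_bit v s) = set_bit v (flp n s)"
  by (rule bit_eqI) (auto simp: bit_flp bit_set_bit_iff bit_unset_bit_iff)

lemma spin_set: "spin (set_bit v s) u = (if u = v then 1 else spin s u)"
  by (auto simp: spin_def bit_set_bit_iff)
lemma spin_unset: "spin (unset_bit v s) u = (if u = v then -1 else spin s u)"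
  by (auto simp: spin_def bit_unset_bit_iff)
lemma spin_flp: "u < n \<Longrightarrow> spin (flp n s) u = - spin s u"
  by (auto simp: spin_def bit_flp)

locale ising =
  fixes n :: nat and E :: "nat set set" and J :: "nat set \<Rightarrow> real"
  assumes n1: "n \<ge> 1" and Esub: "E \<subseteq> graph_edges n" and Jnn: "\<forall>e\<in>E. J e \<ge> 0"
begin

abbreviation "N \<equiv> (2::nat)^n"
abbreviation "mu \<equiv> ising_mu n E J"
abbreviation "P \<equiv> glauber n E J"
abbreviation "W \<equiv> ising_weight E J"

definition Pop :: "(nat \<Rightarrow> real) \<Rightarrow> nat \<Rightarrow> real" where
  "Pop h x = (\<Sum>y<N. P x y * h y)"

definition Z :: "nat \<Rightarrow> nat \<Rightarrow> real" where
  "Z v s = mu (set_bit v s) + mu (unset_bit v s)"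

lemma W_pos: "W s > 0" by (simp add: ising_weight_def)

lemma Wsum_pos: "(\<Sum>t<N. W t) > 0"
  by (rule sum_pos) (auto simp: W_pos lessThan_empty_iff)

lemma mu_pos: "mu s > 0"
  using Wsum_pos W_pos by (simp add: ising_mu_def)

lemma Z_pos: "Z v s > 0" by (simp add: Z_def add_pos_pos mu_pos)

lemma edge_form: "e \<in> E \<Longrightarrow> \<exists>a b. e = {a,b} \<and> a < n \<and> b < n \<and> a \<noteq> b"
  using Esub by (auto simp: graph_edges_def)

lemma agree_set:
  assumes "x < N" "v < n"
  shows "{y. y < N \<and> (\<forall>w<n. w \<noteq> v \<longrightarrow> (bit y w \<longleftrightarrow> bit x w))} = {set_bit v x, unset_bit v x}"
proof (rule equalityI; rule subsetI)
  fix y assume "y \<in> {y. y < N \<and> (\<forall>w<n. w \<noteq> v \<longrightarrow> (bit y w \<longleftrightarrow> bit x w))}"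
  then have y: "y < N" "\<forall>w<n. w \<noteq> v \<longrightarrow> (bit y w \<longleftrightarrow> bit x w)" by auto
  show "y \<in> {set_bit v x, unset_bit v x}"
  proof (cases "bit y v")
    case True
    have "y = set_bit v x"
      using y True assms by (intro bits_eq[of _ n]) (auto simp: set_bit_lt bit_set_bit_iff)
    then show ?thesis by simp
  next
    case False
    have "y = unset_bit v x"
      using y False assms by (intro bits_eq[of _ n]) (auto simp: unset_bit_lt bit_unset_bit_iff)
    then show ?thesis by simp
  qed
next
  fix y assume "y \<in> {set_bit v x, unset_bit v x}"
  then show "y \<in> {y. y < N \<and> (\<forall>w<n. w \<noteq> v \<longrightarrow> (bit y w \<longleftrightarrow> bit x w))}"
    using assms by (auto simp: set_bit_lt unset_bit_lt bit_set_bit_iff bit_unset_bit_iff)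
qed

lemma set_ne_unset: "set_bit v x \<noteq> unset_bit v (x::nat)"
  by (metis bit_set_bit_iff bit_unset_bit_iff possible_bit_nat)

lemma Pop_eq:
  assumes x: "x < N"
  shows "Pop h x = (1/real n) * (\<Sum>v<n. (mu (set_bit v x) * h (set_bit v x)
      + mu (unset_bit v x) * h (unset_bit v x)) / Z v x)"
proof -
  define A where "A v (y::nat) = (\<forall>w<n. w \<noteq> v \<longrightarrow> (bit y w \<longleftrightarrow> bit x w))" for v y
  have "Pop h x = (\<Sum>y<N. \<Sum>v<n. (1/real n) * (if A v y then mu y / Z v x * h y else 0))"
    unfolding Pop_def glauber_def Z_def A_def
    by (auto intro!: sum.cong simp: sum_distrib_left sum_distrib_right)
  also have "\<dots> = (\<Sum>v<n. \<Sum>y<N. (1/real n) * (if A v y then mu y / Z v x * h y else 0))"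
    by (rule sum.swap)
  also have "\<dots> = (\<Sum>v<n. (1/real n) * ((mu (set_bit v x) * h (set_bit v x)
      + mu (unset_bit v x) * h (unset_bit v x)) / Z v x))"
  proof (rule sum.cong[OF refl])
    fix v assume v: "v \<in> {..<n}"
    have "(\<Sum>y<N. (if A v y then mu y / Z v x * h y else 0))
        = (\<Sum>y\<in>{..<N} \<inter> {y. A v y}. mu y / Z v x * h y)"
      by (subst sum.inter_restrict) auto
    also have "{..<N} \<inter> {y. A v y} = {set_bit v x, unset_bit v x}"
      using agree_set[OF x, of v] v unfolding A_def by auto
    also have "(\<Sum>y\<in>{set_bit v x, unset_bit v x}. mu y / Z v x * h y)
       = (mu (set_bit v x) * h (set_bit v x) + mu (unset_bit v x) * h (unset_bit v x)) / Z v x"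
      using set_ne_unset[of v x] by (simp add: add_divide_distrib)
    finally show "(\<Sum>y<N. (1/real n) * (if A v y then mu y / Z v x * h y else 0)) =
      (1/real n) * ((mu (set_bit v x) * h (set_bit v x)
      + mu (unset_bit v x) * h (unset_bit v x)) / Z v x)"
      by (simp only: sum_distrib_left[symmetric])
  qed
  also have "\<dots> = (1/real n) * (\<Sum>v<n. (mu (set_bit v x) * h (set_bit v x)
      + mu (unset_bit v x) * h (unset_bit v x)) / Z v x)"
    by (simp add: sum_distrib_left)
  finally show ?thesis .
qed

lemma P_nonneg: "P x y \<ge> 0"
  unfolding glauber_def
  by (auto intro!: mult_nonneg_nonneg sum_nonneg divide_nonneg_nonneg less_imp_le[OF mu_pos] add_nonneg_nonneg)

lemma Pop_cong: "(\<And>y. y < N \<Longrightarrow> g y = h y) \<Longrightarrow> Pop g x = Pop h x"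
  unfolding Pop_def by (auto intro!: sum.cong)

lemma Pop_diff: "Pop (\<lambda>y. g y - h y) = (\<lambda>x. Pop g x - Pop h x)"
  unfolding Pop_def by (auto simp: sum_subtractf right_diff_distrib)

lemma Pop_scale: "Pop (\<lambda>y. c * g y) x = c * Pop g x"
  unfolding Pop_def by (auto simp: sum_distrib_left mult_ac)

lemma term_bounds:
  fixes a b hs hu ms mv :: real
  assumes "a \<le> hs" "hs \<le> b" "a \<le> hu" "hu \<le> b" "ms > 0" "mv > 0"
  shows "a \<le> (ms * hs + mv * hu) / (ms + mv)" "(ms * hs + mv * hu) / (ms + mv) \<le> b"
proof -
  have m1: "ms * a \<le> ms * hs" by (rule mult_left_mono) (use assms in auto)
  have m2: "mv * a \<le> mv * hu" by (rule mult_left_mono) (use assms in auto)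
  have m3: "ms * hs \<le> ms * b" by (rule mult_left_mono) (use assms in auto)
  have m4: "mv * hu \<le> mv * b" by (rule mult_left_mono) (use assms in auto)
  note m = m1 m2 m3 m4
  have "(ms + mv) * a \<le> ms * hs + mv * hu"
    using m(1,2) by (simp add: distrib_right)
  then show "a \<le> (ms * hs + mv * hu) / (ms + mv)" using assms by (simp add: pos_le_divide_eq mult.commute)
  have "ms * hs + mv * hu \<le> (ms + mv) * b"
    using m(3,4) by (simp add: distrib_right)
  then show "(ms * hs + mv * hu) / (ms + mv) \<le> b" using assms by (simp add: pos_divide_le_eq mult.commute)
qed

lemma Pop_bounds:
  assumes h: "\<And>y. y < N \<Longrightarrow> a \<le> h y \<and> h y \<le> b" and x: "x < N"
  shows "a \<le> Pop h x \<and> Pop h x \<le> b"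
proof -
  define t where "t v = (mu (set_bit v x) * h (set_bit v x)
      + mu (unset_bit v x) * h (unset_bit v x)) / Z v x" for v
  have tb: "a \<le> t v \<and> t v \<le> b" if v: "v < n" for v
    using term_bounds[of a "h (set_bit v x)" b "h (unset_bit v x)" "mu (set_bit v x)" "mu (unset_bit v x)"]
      h[OF set_bit_lt[OF v x]] h[OF unset_bit_lt[OF x]] mu_pos
    unfolding t_def Z_def by auto
  have s1: "real n * a \<le> (\<Sum>v<n. t v)"
    using sum_mono[of "{..<n}" "\<lambda>_. a" t] tb by auto
  have s2: "(\<Sum>v<n. t v) \<le> real n * b"
    using sum_mono[of "{..<n}" t "\<lambda>_. b"] tb by auto
  have np: "real n > 0" using n1 by simp
  have "Pop h x = (1/real n) * (\<Sum>v<n. t v)" unfolding t_def by (rule Pop_eq[OF x])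
  then have e: "real n * Pop h x = (\<Sum>v<n. t v)" using np by simp
  have "a \<le> Pop h x" using mult_le_cancel_left_pos[OF np, of a "Pop h x"] e s1 by simp
  moreover have "Pop h x \<le> b" using mult_le_cancel_left_pos[OF np, of "Pop h x" b] e s2 by simp
  ultimately show ?thesis by simp
qed

lemma Pop_const: "x < N \<Longrightarrow> Pop (\<lambda>_. c) x = c"
  using Pop_bounds[of c "\<lambda>_. c" c x] by auto

lemma iter_cong: "(\<And>y. y < N \<Longrightarrow> g y = h y) \<Longrightarrow> x < N \<Longrightarrow> (Pop^^t) g x = (Pop^^t) h x"
proof (induction t arbitrary: g h)
  case 0 then show ?case by simp
next
  case (Suc t)
  have "Pop g = Pop h" by (rule ext, rule Pop_cong) (use Suc.prems in auto)
  then show ?case by (simp add: funpow_Suc_right del: funpow.simps)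
qed

lemma iter_bounds: "(\<And>y. y < N \<Longrightarrow> a \<le> h y \<and> h y \<le> b) \<Longrightarrow> x < N \<Longrightarrow> a \<le> (Pop^^t) h x \<and> (Pop^^t) h x \<le> b"
proof (induction t arbitrary: h)
  case 0 then show ?case by simp
next
  case (Suc t)
  have "\<And>y. y < N \<Longrightarrow> a \<le> Pop h y \<and> Pop h y \<le> b" using Pop_bounds Suc.prems by blast
  from Suc.IH[OF this Suc.prems(2)] show ?case by (simp add: funpow_Suc_right del: funpow.simps)
qed

lemma iter_diff: "(Pop^^t) (\<lambda>y. g y - h y) = (\<lambda>x. (Pop^^t) g x - (Pop^^t) h x)"
  by (induction t) (simp_all add: Pop_diff)

lemma iter_eig:
  assumes "\<And>x. x < N \<Longrightarrow> Pop f x = c * f x"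
  shows "x < N \<Longrightarrow> (Pop^^t) f x = c^t * f x"
proof (induction t arbitrary: x)
  case 0 then show ?case by simp
next
  case (Suc t)
  have "(Pop^^Suc t) f x = Pop ((Pop^^t) f) x" by simp
  also have "\<dots> = Pop (\<lambda>y. c^t * f y) x" by (rule Pop_cong) (use Suc.IH in auto)
  also have "\<dots> = c^t * Pop f x" by (rule Pop_scale)
  also have "\<dots> = c^Suc t * f x" using assms[OF Suc.prems] by simp
  finally show ?case .
qed

definition H :: "nat \<Rightarrow> real" where
  "H s = (\<Sum>e\<in>E. J e * (\<Prod>v\<in>e. spin s v))"

lemma W_H: "W s = exp (H s)" by (simp add: ising_weight_def H_def)

lemma edge_diff_mono:
  assumes "a \<noteq> b" "cle n x x'" "a < n" "b < n"
  shows "spin (unset_bit v x') a * spin (unset_bit v x') b - spin (set_bit v x') a * spin (set_bit v x') b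
    \<le> spin (unset_bit v x) a * spin (unset_bit v x) b - spin (set_bit v x) a * spin (set_bit v x) b"
  unfolding spin_set spin_unset using assms by (auto simp: spin_def cle_def)

lemma H_diff_mono:
  assumes "cle n x x'"
  shows "H (unset_bit v x') - H (set_bit v x') \<le> H (unset_bit v x) - H (set_bit v x)"
proof -
  have eq: "H (unset_bit v s) - H (set_bit v s) = (\<Sum>e\<in>E. J e * ((\<Prod>u\<in>e. spin (unset_bit v s) u) - (\<Prod>u\<in>e. spin (set_bit v s) u)))" for s
    unfolding H_def by (simp add: sum_subtractf right_diff_distrib)
  show ?thesis unfolding eq
  proof (rule sum_mono)
    fix e assume e: "e \<in> E"
    then obtain a b where ab: "e = {a,b}" "a < n" "b < n" "a \<noteq> b" using edge_form by blast
    have J0: "J e \<ge> 0" using Jnn e by auto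
    have "(\<Prod>u\<in>e. spin (unset_bit v x') u) - (\<Prod>u\<in>e. spin (set_bit v x') u)
      \<le> (\<Prod>u\<in>e. spin (unset_bit v x) u) - (\<Prod>u\<in>e. spin (set_bit v x) u)"
      using edge_diff_mono[OF ab(4) assms ab(2,3), of v] ab by simp
    then show "J e * ((\<Prod>u\<in>e. spin (unset_bit v x') u) - (\<Prod>u\<in>e. spin (set_bit v x') u))
      \<le> J e * ((\<Prod>u\<in>e. spin (unset_bit v x) u) - (\<Prod>u\<in>e. spin (set_bit v x) u))"
      using J0 by (rule mult_left_mono)
  qed
qed

lemma frac_mono:
  fixes a b a' b' :: real
  assumes "a > 0" "b > 0" "a' > 0" "b' > 0" "b' * a \<le> b * a'"
  shows "a / (a + b) \<le> a' / (a' + b')"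
  using assms by (simp add: divide_simps) (simp add: algebra_simps)

lemma p_eq: "mu (set_bit v s) / Z v s = W (set_bit v s) / (W (set_bit v s) + W (unset_bit v s))"
  using Wsum_pos unfolding Z_def ising_mu_def by (simp add: add_divide_distrib[symmetric])

lemma p_mono:
  assumes "cle n x x'"
  shows "mu (set_bit v x) / Z v x \<le> mu (set_bit v x') / Z v x'"
  unfolding p_eq W_H
proof (rule frac_mono)
  have "H (unset_bit v x') + H (set_bit v x) \<le> H (unset_bit v x) + H (set_bit v x')"
    using H_diff_mono[OF assms, of v] by simp
  then show "exp (H (unset_bit v x')) * exp (H (set_bit v x)) \<le> exp (H (unset_bit v x)) * exp (H (set_bit v x'))"
    by (simp add: exp_add[symmetric])
qed auto

lemma cle_set: "cle n x x' \<Longrightarrow> cle n (set_bit v x) (set_bit v x')"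
  by (auto simp: cle_def bit_set_bit_iff)
lemma cle_unset: "cle n x x' \<Longrightarrow> cle n (unset_bit v x) (unset_bit v x')"
  by (auto simp: cle_def bit_unset_bit_iff)
lemma cle_unset_set: "cle n (unset_bit v x) (set_bit v x)"
  by (auto simp: cle_def bit_unset_bit_iff bit_set_bit_iff)
lemma cle_refl: "cle n x x" by (simp add: cle_def)

lemma Pop_incr:
  assumes h: "incr n h"
  shows "incr n (Pop h)"
  unfolding incr_def
proof (intro allI impI)
  fix x x' assume x: "x < N" and x': "x' < N" and le: "cle n x x'"
  define t where "t s v = (mu (set_bit v s) * h (set_bit v s)
      + mu (unset_bit v s) * h (unset_bit v s)) / Z v s" for s v
  have tle: "t x v \<le> t x' v" if v: "v < n" for v
  proof -
    define p where "p s = mu (set_bit v s) / Z v s" for s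
    have tp: "t s v = h (unset_bit v s) + p s * (h (set_bit v s) - h (unset_bit v s))" for s
    proof -
      have "Z v s > 0" by (rule Z_pos)
      then show ?thesis unfolding t_def p_def Z_def by (simp add: field_simps)
    qed
    have p01: "0 \<le> p s" "p s \<le> 1" for s
      unfolding p_def Z_def using mu_pos[of "set_bit v s"] mu_pos[of "unset_bit v s"] by auto
    have pm: "p x \<le> p x'" unfolding p_def by (rule p_mono[OF le])
    have hu: "h (unset_bit v x) \<le> h (unset_bit v x')"
      using h cle_unset[OF le] unset_bit_lt x x' unfolding incr_def by blast
    have hs: "h (set_bit v x) \<le> h (set_bit v x')"
      using h cle_set[OF le] set_bit_lt[OF v] x x' unfolding incr_def by blast
    have hus: "h (unset_bit v x') \<le> h (set_bit v x')"
      using h cle_unset_set set_bit_lt[OF v] unset_bit_lt x' unfolding incr_def by blast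
    have "t x v = (1 - p x) * h (unset_bit v x) + p x * h (set_bit v x)" unfolding tp by (simp add: algebra_simps)
    also have "\<dots> \<le> (1 - p x) * h (unset_bit v x') + p x * h (set_bit v x')"
      using p01[of x] hu hs by (intro add_mono mult_left_mono) auto
    also have "\<dots> = h (unset_bit v x') + p x * (h (set_bit v x') - h (unset_bit v x'))" by (simp add: algebra_simps)
    also have "\<dots> \<le> h (unset_bit v x') + p x' * (h (set_bit v x') - h (unset_bit v x'))"
      using pm hus by (intro add_left_mono mult_right_mono) auto
    also have "\<dots> = t x' v" unfolding tp ..
    finally show ?thesis .
  qed
  have "(\<Sum>v<n. t x v) \<le> (\<Sum>v<n. t x' v)" by (rule sum_mono) (use tle in auto)
  then show "Pop h x \<le> Pop h x'"
    unfolding Pop_eq[OF x] Pop_eq[OF x'] t_def[symmetric] by (simp add: divide_right_mono)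
qed

lemma iter_incr: "incr n h \<Longrightarrow> incr n ((Pop^^t) h)"
  by (induction t) (simp_all add: Pop_incr)

lemma H_flp: "H (flp n s) = H s"
  unfolding H_def
proof (rule sum.cong[OF refl])
  fix e assume e: "e \<in> E"
  then obtain a b where ab: "e = {a,b}" "a < n" "b < n" "a \<noteq> b" using edge_form by blast
  show "J e * (\<Prod>v\<in>e. spin (flp n s) v) = J e * (\<Prod>v\<in>e. spin s v)"
    using ab by (simp add: spin_flp)
qed

lemma mu_flp: "mu (flp n s) = mu s"
  by (simp add: ising_mu_def W_H H_flp)

lemma Z_flp: "v < n \<Longrightarrow> Z v (flp n x) = Z v x"
  unfolding Z_def by (metis flp_flp flp_unset_bit flp_set_bit mu_flp add.commute)

lemma Pop_flp:
  assumes x: "x < N"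
  shows "Pop h (flp n x) = Pop (\<lambda>y. h (flp n y)) x"
proof -
  have fx: "flp n x < N" using flp_lt[OF x] .
  show ?thesis unfolding Pop_eq[OF x] Pop_eq[OF fx]
  proof (intro arg_cong[where f="\<lambda>u. (1/real n) * u"] sum.cong refl)
    fix v assume "v \<in> {..<n}"
    then have v: "v < n" by simp
    have a: "set_bit v (flp n x) = flp n (unset_bit v x)" using flp_unset_bit[OF v] by simp
    have b: "unset_bit v (flp n x) = flp n (set_bit v x)" using flp_set_bit[OF v] by simp
    show "(mu (set_bit v (flp n x)) * h (set_bit v (flp n x)) +
          mu (unset_bit v (flp n x)) * h (unset_bit v (flp n x))) / Z v (flp n x) =
         (mu (set_bit v x) * h (flp n (set_bit v x)) +
          mu (unset_bit v x) * h (flp n (unset_bit v x))) / Z v x"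
      unfolding a b Z_flp[OF v] mu_flp by simp
  qed
qed

lemma iter_flp: "x < N \<Longrightarrow> (Pop^^t) h (flp n x) = (Pop^^t) (\<lambda>y. h (flp n y)) x"
proof (induction t arbitrary: x)
  case 0 then show ?case by simp
next
  case (Suc t)
  have "(Pop^^Suc t) h (flp n x) = Pop ((Pop^^t) h) (flp n x)" by simp
  also have "\<dots> = Pop (\<lambda>y. (Pop^^t) h (flp n y)) x" by (rule Pop_flp[OF Suc.prems])
  also have "\<dots> = Pop ((Pop^^t) (\<lambda>y. h (flp n y))) x" by (rule Pop_cong) (use Suc.IH in auto)
  also have "\<dots> = (Pop^^Suc t) (\<lambda>y. h (flp n y)) x" by simp
  finally show ?case .
qed

lemma row_sum: "x < N \<Longrightarrow> (\<Sum>y<N. P x y) = 1"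
  using Pop_const[of x 1] by (simp add: Pop_def)

lemma detailed_balance:
  assumes x: "x < N" and y: "y < N"
  shows "mu x * P x y = mu y * P y x"
proof -
  define A where "A v = (\<forall>w<n. w \<noteq> v \<longrightarrow> (bit y w \<longleftrightarrow> bit x w))" for v
  have "mu x * P x y = (1/real n) * (\<Sum>v<n. (if A v then mu x * mu y / Z v x else 0))"
    unfolding glauber_def A_def Z_def by (auto simp: sum_distrib_left intro!: sum.cong)
  also have "\<dots> = (1/real n) * (\<Sum>v<n. (if A v then mu y * mu x / Z v y else 0))"
  proof (intro arg_cong[where f="\<lambda>u. (1/real n) * u"] sum.cong refl)
    fix v assume v: "v \<in> {..<n}"
    show "(if A v then mu x * mu y / Z v x else 0) = (if A v then mu y * mu x / Z v y else 0)"
    proof (cases "A v")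
      case True
      have "set_bit v x = set_bit v y"
        using True v x y by (intro bits_eq[of _ n]) (auto simp: set_bit_lt bit_set_bit_iff A_def)
      moreover have "unset_bit v x = unset_bit v y"
        using True v x y by (intro bits_eq[of _ n]) (auto simp: unset_bit_lt bit_unset_bit_iff A_def)
      ultimately show ?thesis by (simp add: Z_def mult.commute)
    qed simp
  qed
  also have "\<dots> = mu y * P y x"
    unfolding glauber_def A_def Z_def by (auto simp: sum_distrib_left mult_ac intro!: sum.cong)
  finally show ?thesis .
qed

lemma stationary: "(\<Sum>x<N. mu x * Pop h x) = (\<Sum>y<N. mu y * h y)"
proof -
  have "(\<Sum>x<N. mu x * Pop h x) = (\<Sum>x<N. \<Sum>y<N. mu x * P x y * h y)"
    unfolding Pop_def by (simp add: sum_distrib_left mult_ac)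
  also have "\<dots> = (\<Sum>y<N. \<Sum>x<N. mu x * P x y * h y)" by (rule sum.swap)
  also have "\<dots> = (\<Sum>y<N. \<Sum>x<N. mu y * h y * P y x)"
    by (intro sum.cong refl) (simp add: detailed_balance mult_ac)
  also have "\<dots> = (\<Sum>y<N. mu y * h y * (\<Sum>x<N. P y x))"
    by (simp add: sum_distrib_left)
  also have "\<dots> = (\<Sum>y<N. mu y * h y)" by (intro sum.cong refl) (simp add: row_sum)
  finally show ?thesis .
qed

lemma iter_stationary: "(\<Sum>x<N. mu x * (Pop^^t) h x) = (\<Sum>y<N. mu y * h y)"
proof (induction t arbitrary: h)
  case 0 then show ?case by simp
next
  case (Suc t)
  have "(\<Sum>x<N. mu x * (Pop^^Suc t) h x) = (\<Sum>x<N. mu x * (Pop^^t) (Pop h) x)"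
    by (simp add: funpow_Suc_right del: funpow.simps)
  also have "\<dots> = (\<Sum>x<N. mu x * Pop h x)" by (rule Suc.IH)
  also have "\<dots> = (\<Sum>y<N. mu y * h y)" by (rule stationary)
  finally show ?case .
qed

lemma mu_sum: "(\<Sum>s<N. mu s) = 1"
  using Wsum_pos unfolding ising_mu_def by (simp add: sum_divide_distrib[symmetric])

abbreviation "M \<equiv> glauber_mat n E J"

lemma M_carrier: "M \<in> carrier_mat N N" by (simp add: glauber_mat_def)
lemma M_index: "x < N \<Longrightarrow> y < N \<Longrightarrow> M $$ (x,y) = P x y" by (simp add: glauber_mat_def)

lemma mat_pow_app: "x < N \<Longrightarrow> (\<Sum>y<N. (M ^\<^sub>m t) $$ (x,y) * h y) = (Pop^^t) h x"
proof (induction t arbitrary: h x)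
  case 0
  have "(M ^\<^sub>m 0) = 1\<^sub>m N" using M_carrier by simp
  then have "(\<Sum>y<N. (M ^\<^sub>m 0) $$ (x,y) * h y) = (\<Sum>y<N. if y = x then h y else 0)"
    using 0 by (intro sum.cong) auto
  then show ?case using 0 by simp
next
  case (Suc t)
  have dimQ: "dim_row (M ^\<^sub>m t) = N" "dim_col (M ^\<^sub>m t) = N" using M_carrier by auto
  have e: "(M ^\<^sub>m Suc t) $$ (x,y) = (\<Sum>k<N. (M ^\<^sub>m t) $$ (x,k) * P k y)" if y: "y < N" for y
  proof -
    have "(M ^\<^sub>m Suc t) $$ (x,y) = row (M ^\<^sub>m t) x \<bullet> col M y"
      using dimQ Suc.prems y M_carrier by (simp add: index_mult_mat)
    also have "\<dots> = (\<Sum>k<N. (M ^\<^sub>m t) $$ (x,k) * P k y)"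
      unfolding scalar_prod_def using dimQ Suc.prems y M_carrier
      by (auto simp: M_index atLeast0LessThan intro!: sum.cong)
    finally show ?thesis .
  qed
  have "(\<Sum>y<N. (M ^\<^sub>m Suc t) $$ (x,y) * h y) = (\<Sum>y<N. \<Sum>k<N. (M ^\<^sub>m t) $$ (x,k) * P k y * h y)"
    using e by (simp add: sum_distrib_right)
  also have "\<dots> = (\<Sum>k<N. \<Sum>y<N. (M ^\<^sub>m t) $$ (x,k) * P k y * h y)" by (rule sum.swap)
  also have "\<dots> = (\<Sum>k<N. (M ^\<^sub>m t) $$ (x,k) * Pop h k)"
    unfolding Pop_def by (simp add: sum_distrib_left mult_ac)
  also have "\<dots> = (Pop^^t) (Pop h) x" by (rule Suc.IH[OF Suc.prems])
  also have "\<dots> = (Pop^^Suc t) h x" by (simp add: funpow_Suc_right del: funpow.simps)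
  finally show ?case .
qed

lemma mat_pow_entry: "x < N \<Longrightarrow> s < N \<Longrightarrow> (M ^\<^sub>m t) $$ (x,s) = (Pop^^t) (\<lambda>y. if y = s then 1 else 0) x"
  using mat_pow_app[of x t "\<lambda>y. if y = s then 1 else 0"] by (simp add: if_distrib cong: if_cong)

lemma Pop_nonneg: "(\<And>y. y < N \<Longrightarrow> g y \<ge> 0) \<Longrightarrow> Pop g x \<ge> 0"
  unfolding Pop_def by (auto intro!: sum_nonneg mult_nonneg_nonneg P_nonneg)

lemma Pop_pos_step:
  assumes x: "x < N" and v: "v < n" and g: "\<And>y. y < N \<Longrightarrow> g y \<ge> 0"
    and z: "z \<in> {set_bit v x, unset_bit v x}" and gz: "g z > 0"
  shows "Pop g x > 0"
proof -
  define t where "t v = (mu (set_bit v x) * g (set_bit v x)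
      + mu (unset_bit v x) * g (unset_bit v x)) / Z v x" for v
  have tnn: "t u \<ge> 0" if "u < n" for u
  proof -
    have "0 \<le> mu (set_bit u x) * g (set_bit u x)"
      using g[OF set_bit_lt[OF that x]] mu_pos[of "set_bit u x"] by simp
    moreover have "0 \<le> mu (unset_bit u x) * g (unset_bit u x)"
      using g[OF unset_bit_lt[OF x]] mu_pos[of "unset_bit u x"] by simp
    ultimately show ?thesis unfolding t_def
      by (intro divide_nonneg_nonneg less_imp_le[OF Z_pos] add_nonneg_nonneg)
  qed
  have tpos: "t v > 0"
  proof -
    have a1: "mu (set_bit v x) * g (set_bit v x) \<ge> 0"
      using g[OF set_bit_lt[OF v x]] mu_pos[of "set_bit v x"] by simp
    have a2: "mu (unset_bit v x) * g (unset_bit v x) \<ge> 0"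
      using g[OF unset_bit_lt[OF x]] mu_pos[of "unset_bit v x"] by simp
    note a = a1 a2
    have "mu z * g z > 0" using gz mu_pos by simp
    then have "mu (set_bit v x) * g (set_bit v x) + mu (unset_bit v x) * g (unset_bit v x) > 0"
      using z a by auto
    then show ?thesis unfolding t_def using Z_pos by simp
  qed
  have "(\<Sum>u<n. t u) > 0" using tnn tpos v by (intro sum_pos2[of _ v]) auto
  then show ?thesis unfolding Pop_eq[OF x] t_def[symmetric] using n1 by simp
qed

lemma iter_nonneg: "(\<And>y. y < N \<Longrightarrow> g y \<ge> 0) \<Longrightarrow> x < N \<Longrightarrow> (Pop^^t) g x \<ge> 0"
  using iter_bounds[of 0 g "Max (g ` {..<N})" x t] by (auto intro: Max_ge)

lemma path_pos:
  "i \<le> n \<Longrightarrow> x < N \<Longrightarrow> (\<And>y. y < N \<Longrightarrow> g y \<ge> 0) \<Longrightarrow> z < N \<Longrightarrow> g z > 0 \<Longrightarrow>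
   (\<forall>w. i \<le> w \<longrightarrow> (bit z w \<longleftrightarrow> bit x w)) \<Longrightarrow> (Pop^^i) g x > 0"
proof (induction i arbitrary: x g z)
  case 0
  have "z = x" by (rule bit_eqI) (use 0 in auto)
  then show ?case using 0 by simp
next
  case (Suc i)
  have i: "i < n" using Suc.prems by simp
  define z' where "z' = (if bit x i then set_bit i z else unset_bit i z)"
  have z'lt: "z' < N" unfolding z'_def using set_bit_lt[OF i Suc.prems(4)] unset_bit_lt[OF Suc.prems(4)] by auto
  have "z \<in> {set_bit i z', unset_bit i z'}"
  proof -
    have "set_bit i z' = set_bit i z" "unset_bit i z' = unset_bit i z"
      unfolding z'_def by (rule bit_eqI; auto simp: bit_set_bit_iff bit_unset_bit_iff)+
    moreover have "z = set_bit i z \<or> z = unset_bit i z"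
      by (cases "bit z i") (auto intro!: bit_eqI simp: bit_set_bit_iff bit_unset_bit_iff)
    ultimately show ?thesis by auto
  qed
  then have pz: "Pop g z' > 0" using Pop_pos_step[of z' i g z] z'lt i Suc.prems(3,5) by blast
  have agree: "\<forall>w. i \<le> w \<longrightarrow> (bit z' w \<longleftrightarrow> bit x w)"
  proof (intro allI impI)
    fix w assume iw: "i \<le> w"
    show "bit z' w = bit x w"
    proof (cases "w = i")
      case True then show ?thesis by (auto simp: z'_def bit_set_bit_iff bit_unset_bit_iff)
    next
      case False then have "Suc i \<le> w" using iw by simp
      then show ?thesis using Suc.prems(6) False by (auto simp: z'_def bit_set_bit_iff bit_unset_bit_iff)
    qed
  qed
  have gn: "\<And>y. y < N \<Longrightarrow> Pop g y \<ge> 0" using Pop_nonneg Suc.prems(3) by blast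
  have "i \<le> n" using i by simp
  have "(Pop^^i) (Pop g) x > 0"
    by (rule Suc.IH[of x "Pop g" z', OF \<open>i \<le> n\<close> Suc.prems(2) gn z'lt pz agree])
  then show ?case by (simp add: funpow_Suc_right del: funpow.simps)
qed

lemma iter_n_pos:
  assumes x: "x < N" and y: "y < N"
  shows "(M ^\<^sub>m n) $$ (x,y) > 0"
proof -
  have "(Pop^^n) (\<lambda>u. if u = y then 1 else 0) x > 0"
  proof (rule path_pos[OF le_refl x _ y])
    show "\<forall>w. n \<le> w \<longrightarrow> bit y w = bit x w"
      using x y by (auto simp: lt_pow_bits)
  qed auto
  then show ?thesis using mat_pow_entry[OF x y] by simp
qed

lemma Pow_row_sum: "x < N \<Longrightarrow> (\<Sum>y<N. (M ^\<^sub>m t) $$ (x,y)) = 1"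
  using mat_pow_app[of x t "\<lambda>_. 1"] iter_bounds[of 1 "\<lambda>_. 1" 1 x t] by simp

lemma ex_argmin: "\<exists>y0<N. \<forall>y<N. h y0 \<le> (h y :: real)"
proof -
  have "finite (h ` {..<N})" "h ` {..<N} \<noteq> {}" by (auto simp: lessThan_empty_iff)
  then have "Min (h ` {..<N}) \<in> h ` {..<N}" by (rule Min_in)
  then obtain y0 where "y0 < N" "h y0 = Min (h ` {..<N})" by auto
  then show ?thesis by (metis Min_le finite_imageI finite_lessThan imageI lessThan_iff)
qed

lemma spread_contract:
  fixes Q :: "nat \<Rightarrow> nat \<Rightarrow> real" and \<delta> :: real
  assumes Qd: "\<And>x y. x < N \<Longrightarrow> y < N \<Longrightarrow> Q x y \<ge> \<delta>"
    and Qs: "\<And>x. x < N \<Longrightarrow> (\<Sum>y<N. Q x y) = 1"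
    and hD: "\<And>y y'. y < N \<Longrightarrow> y' < N \<Longrightarrow> h y - h y' \<le> D"
    and x: "x < N" and x': "x' < N"
  shows "(\<Sum>y<N. Q x y * h y) - (\<Sum>y<N. Q x' y * h y) \<le> (1 - real N * \<delta>) * D"
proof -
  obtain y0 where y0: "y0 < N" "\<forall>y<N. h y0 \<le> h y" using ex_argmin by blast
  define a where "a = h y0"
  have ha: "0 \<le> h y - a" "h y - a \<le> D" if "y < N" for y using y0 hD[OF that y0(1)] that a_def by auto
  have exp: "(\<Sum>y<N. (Q u y - \<delta>) * (h y - a)) = (\<Sum>y<N. Q u y * h y) - a - \<delta> * (\<Sum>y<N. (h y - a))"
    if u: "u < N" for u
  proof -
    have "(\<Sum>y<N. (Q u y - \<delta>) * (h y - a)) = (\<Sum>y<N. Q u y * h y - a * Q u y - \<delta> * (h y - a))"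
      by (intro sum.cong refl) (simp add: algebra_simps)
    also have "\<dots> = (\<Sum>y<N. Q u y * h y) - (\<Sum>y<N. a * Q u y) - (\<Sum>y<N. \<delta> * (h y - a))"
      by (simp only: sum_subtractf)
    also have "\<dots> = (\<Sum>y<N. Q u y * h y) - a * (\<Sum>y<N. Q u y) - \<delta> * (\<Sum>y<N. (h y - a))"
      by (simp only: sum_distrib_left)
    finally show ?thesis using Qs[OF u] by simp
  qed
  have A: "(\<Sum>y<N. (Q x y - \<delta>) * (h y - a)) \<le> (\<Sum>y<N. (Q x y - \<delta>) * D)"
    by (intro sum_mono mult_left_mono) (use ha Qd x in auto)
  have A2: "(\<Sum>y<N. (Q x y - \<delta>) * D) = (1 - real N * \<delta>) * D"
    using Qs[OF x] by (simp add: sum_distrib_right[symmetric] sum_subtractf)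
  have B: "(\<Sum>y<N. (Q x' y - \<delta>) * (h y - a)) \<ge> 0"
    by (intro sum_nonneg mult_nonneg_nonneg) (use ha Qd x' in auto)
  show ?thesis using A A2 B exp[OF x] exp[OF x'] by linarith
qed

lemma exists_tv: "\<exists>t. tv_from_plus n E J t \<le> 1/4"
proof -
  define Q where "Q x y = (M ^\<^sub>m n) $$ (x,y)" for x y
  define \<delta> where "\<delta> = Min {Q x y | x y. x < N \<and> y < N}"
  have fin: "finite {Q x y | x y. x < N \<and> y < N}"
  proof -
    have "{Q x y | x y. x < N \<and> y < N} = (\<lambda>(x,y). Q x y) ` ({..<N} \<times> {..<N})" by auto
    then show ?thesis by simp
  qed
  have Qd: "Q x y \<ge> \<delta>" if "x < N" "y < N" for x y
    unfolding \<delta>_def using fin that by (intro Min_le) auto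
  have dpos: "\<delta> > 0"
  proof -
    have "Q 0 0 \<in> {Q x y | x y. x < N \<and> y < N}" by (simp, rule exI[of _ 0], rule exI[of _ 0]) simp
    then have "{Q x y | x y. x < N \<and> y < N} \<noteq> {}" by blast
    then have "\<delta> \<in> {Q x y | x y. x < N \<and> y < N}" unfolding \<delta>_def using fin by (rule Min_in[rotated])
    then show ?thesis using iter_n_pos unfolding Q_def by auto
  qed
  have Qs: "(\<Sum>y<N. Q x y) = 1" if "x < N" for x using Pow_row_sum that unfolding Q_def by blast
  define c where "c = 1 - real N * \<delta>"
  have c1: "c < 1" unfolding c_def using dpos by simp
  have R: "(Pop^^n) h x = (\<Sum>y<N. Q x y * h y)" if "x < N" for h x
    unfolding Q_def using mat_pow_app[OF that] by simp
  have iter: "(\<forall>y y'. y < N \<longrightarrow> y' < N \<longrightarrow> h y - h y' \<le> D) \<longrightarrow>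
     (\<forall>x x'. x < N \<longrightarrow> x' < N \<longrightarrow> ((Pop^^n)^^k) h x - ((Pop^^n)^^k) h x' \<le> c^k * D)" for k h D
  proof (induction k arbitrary: h D)
    case 0 then show ?case by simp
  next
    case (Suc k)
    show ?case
    proof (intro impI allI)
      fix x x' assume hD: "\<forall>y y'. y < N \<longrightarrow> y' < N \<longrightarrow> h y - h y' \<le> D" and x: "x < N" and x': "x' < N"
      have "\<forall>y y'. y < N \<longrightarrow> y' < N \<longrightarrow> (Pop^^n) h y - (Pop^^n) h y' \<le> c * D"
      proof (intro allI impI)
        fix y y' assume y: "y < N" and y': "y' < N"
        show "(Pop^^n) h y - (Pop^^n) h y' \<le> c * D"
          unfolding R[OF y] R[OF y'] c_def
          by (rule spread_contract[where Q=Q and \<delta>=\<delta> and h=h and D=D and x=y and x'=y', OF Qd Qs]) (use hD y y' in auto)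
      qed
      then have "((Pop^^n)^^k) ((Pop^^n) h) x - ((Pop^^n)^^k) ((Pop^^n) h) x' \<le> c^k * (c * D)"
        using Suc.IH x x' by blast
      then show "((Pop^^n)^^Suc k) h x - ((Pop^^n)^^Suc k) h x' \<le> c^Suc k * D"
        by (simp add: funpow_Suc_right mult_ac del: funpow.simps)
    qed
  qed
  obtain k where k: "c^k < 1/4" using real_arch_pow_inv[OF _ c1, of "1/4"] by auto
  define t where "t = n * k"
  define sg where "sg s = (if (M ^\<^sub>m t) $$ (all_plus n, s) \<ge> mu s then 1 else (-1::real))" for s
  have top: "all_plus n < N" by (rule all_plus_lt)
  have sgb: "-1 \<le> sg y \<and> sg y \<le> 1" for y unfolding sg_def by auto
  have "(\<Sum>s<N. \<bar>(M ^\<^sub>m t) $$ (all_plus n, s) - mu s\<bar>)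
      = (\<Sum>s<N. (M ^\<^sub>m t) $$ (all_plus n, s) * sg s - mu s * sg s)"
    by (intro sum.cong refl) (auto simp: sg_def)
  also have "\<dots> = (Pop^^t) sg (all_plus n) - (\<Sum>x<N. mu x * (Pop^^t) sg x)"
    by (simp add: sum_subtractf mat_pow_app[OF top] iter_stationary)
  also have "\<dots> = (\<Sum>x<N. mu x * ((Pop^^t) sg (all_plus n) - (Pop^^t) sg x))"
    by (simp add: right_diff_distrib sum_subtractf sum_distrib_right[symmetric] mu_sum)
  also have "\<dots> \<le> (\<Sum>x<N. mu x * (c^k * 2))"
  proof (intro sum_mono mult_left_mono)
    fix x assume "x \<in> {..<N}"
    then have x: "x < N" by simp
    have "\<forall>y y'. y < N \<longrightarrow> y' < N \<longrightarrow> sg y - sg y' \<le> 2"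
    proof (intro allI impI)
      fix y y' show "sg y - sg y' \<le> 2" using sgb[of y] sgb[of y'] by linarith
    qed
    then have "((Pop^^n)^^k) sg (all_plus n) - ((Pop^^n)^^k) sg x \<le> c^k * 2"
      using iter top x by blast
    then show "(Pop^^t) sg (all_plus n) - (Pop^^t) sg x \<le> c^k * 2"
      unfolding t_def funpow_mult by simp
  qed (use mu_pos in \<open>auto intro: less_imp_le\<close>)
  also have "\<dots> = c^k * 2" by (simp add: sum_distrib_right[symmetric] mu_sum)
  finally have "tv_from_plus n E J t \<le> (1/2) * (c^k * 2)"
    unfolding tv_from_plus_def by simp
  then show ?thesis using k by (intro exI[of _ t]) simp
qed

lemma flp_lt_iff: "x < N \<Longrightarrow> flp n x < N" by (rule flp_lt)

lemma bij_flp: "bij_betw (flp n) {..<N} {..<N}"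
  by (rule bij_betw_byWitness[of _ "flp n"]) (auto simp: flp_lt)

lemma flip_entries:
  assumes s: "s < N"
  shows "(M ^\<^sub>m T) $$ (0, s) = (M ^\<^sub>m T) $$ (all_plus n, flp n s)"
proof -
  have top: "all_plus n < N" by (rule all_plus_lt)
  have "(M ^\<^sub>m T) $$ (0, s) = (Pop^^T) (\<lambda>y. if y = s then 1 else 0) (flp n (all_plus n))"
    using mat_pow_entry[of 0 s T] s by (simp add: flp_all_plus)
  also have "\<dots> = (Pop^^T) (\<lambda>y. if flp n y = s then 1 else 0) (all_plus n)"
    by (rule iter_flp[OF top])
  also have "(\<lambda>y. if flp n y = s then 1 else (0::real)) = (\<lambda>y. if y = flp n s then 1 else 0)"
    by (rule ext) (metis flp_flp)
  also have "(Pop^^T) \<dots> (all_plus n) = (M ^\<^sub>m T) $$ (all_plus n, flp n s)"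
    using mat_pow_entry[OF top flp_lt[OF s]] by simp
  finally show ?thesis .
qed

lemma tv_minus: "(\<Sum>s<N. \<bar>(M ^\<^sub>m T) $$ (0, s) - mu s\<bar>) = (\<Sum>s<N. \<bar>(M ^\<^sub>m T) $$ (all_plus n, s) - mu s\<bar>)"
proof -
  have "(\<Sum>s<N. \<bar>(M ^\<^sub>m T) $$ (0, s) - mu s\<bar>) = (\<Sum>s<N. \<bar>(M ^\<^sub>m T) $$ (all_plus n, flp n s) - mu (flp n s)\<bar>)"
    by (intro sum.cong refl) (simp add: flip_entries mu_flp)
  also have "\<dots> = (\<Sum>s<N. \<bar>(M ^\<^sub>m T) $$ (all_plus n, s) - mu s\<bar>)"
    by (rule sum.reindex_bij_betw[OF bij_flp, where g="\<lambda>s. \<bar>(M ^\<^sub>m T) $$ (all_plus n, s) - mu s\<bar>"])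
  finally show ?thesis .
qed

lemma contract_incr:
  assumes tvT: "tv_from_plus n E J T \<le> 1/4" and h: "incr n h"
    and hD: "\<And>y y'. y < N \<Longrightarrow> y' < N \<Longrightarrow> h y - h y' \<le> D"
    and x: "x < N" and x': "x' < N"
  shows "(Pop^^T) h x - (Pop^^T) h x' \<le> D / 2"
proof -
  define Q where "Q x y = (M ^\<^sub>m T) $$ (x,y)" for x y
  define top where "top = all_plus n"
  have top: "top < N" unfolding top_def by (rule all_plus_lt)
  have z: "(0::nat) < N" by simp
  have g: "incr n ((Pop^^T) h)" by (rule iter_incr[OF h])
  have "(Pop^^T) h x \<le> (Pop^^T) h top" using g x top cle_top[of n x] unfolding incr_def top_def by blast
  moreover have "(Pop^^T) h 0 \<le> (Pop^^T) h x'" using g x' z cle_0[of n x'] unfolding incr_def by blast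
  ultimately have step1: "(Pop^^T) h x - (Pop^^T) h x' \<le> (Pop^^T) h top - (Pop^^T) h 0" by simp
  define c where "c = (h top + h 0) / 2"
  have hb: "\<bar>h s - c\<bar> \<le> D / 2" if s: "s < N" for s
  proof -
    have "h 0 \<le> h s" using h s z cle_0[of n s] unfolding incr_def by blast
    moreover have "h s \<le> h top" using h s top cle_top[of n s] unfolding incr_def top_def by blast
    moreover have "h top - h 0 \<le> D" using hD[OF top z] .
    ultimately show ?thesis unfolding c_def by (simp add: abs_le_iff field_simps)
  qed
  have D0: "D \<ge> 0" using hD[OF z z] by simp
  have rs: "(\<Sum>y<N. Q u y) = 1" if "u < N" for u using Pow_row_sum[OF that] unfolding Q_def .
  have "(Pop^^T) h top - (Pop^^T) h 0 = (\<Sum>s<N. Q top s * h s) - (\<Sum>s<N. Q 0 s * h s)"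
    using mat_pow_app[OF top, of T h] mat_pow_app[OF z, of T h] unfolding Q_def by simp
  also have "\<dots> = (\<Sum>s<N. (Q top s - Q 0 s) * (h s - c))"
  proof -
    have "(\<Sum>s<N. (Q top s - Q 0 s) * (h s - c)) = (\<Sum>s<N. Q top s * h s - Q 0 s * h s - c * (Q top s - Q 0 s))"
      by (intro sum.cong refl) (simp add: algebra_simps)
    also have "\<dots> = (\<Sum>s<N. Q top s * h s) - (\<Sum>s<N. Q 0 s * h s) - (\<Sum>s<N. c * (Q top s - Q 0 s))"
      by (simp only: sum_subtractf)
    also have "(\<Sum>s<N. c * (Q top s - Q 0 s)) = c * ((\<Sum>s<N. Q top s) - (\<Sum>s<N. Q 0 s))"
      by (simp only: sum_distrib_left[symmetric] sum_subtractf)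
    also have "\<dots> = 0" using rs[OF top] rs[OF z] by simp
    finally show ?thesis by simp
  qed
  also have "\<dots> \<le> (\<Sum>s<N. \<bar>Q top s - Q 0 s\<bar> * (D / 2))"
  proof (rule sum_mono)
    fix s assume "s \<in> {..<N}"
    then have s: "s < N" by simp
    have "(Q top s - Q 0 s) * (h s - c) \<le> \<bar>(Q top s - Q 0 s) * (h s - c)\<bar>" by simp
    also have "\<dots> = \<bar>Q top s - Q 0 s\<bar> * \<bar>h s - c\<bar>" by (simp add: abs_mult)
    also have "\<dots> \<le> \<bar>Q top s - Q 0 s\<bar> * (D / 2)" by (rule mult_left_mono[OF hb[OF s]]) simp
    finally show "(Q top s - Q 0 s) * (h s - c) \<le> \<bar>Q top s - Q 0 s\<bar> * (D / 2)" .
  qed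
  also have "\<dots> = (\<Sum>s<N. \<bar>Q top s - Q 0 s\<bar>) * (D / 2)" by (simp add: sum_distrib_right)
  also have "\<dots> \<le> 1 * (D / 2)"
  proof (rule mult_right_mono)
    have "(\<Sum>s<N. \<bar>Q top s - Q 0 s\<bar>) \<le> (\<Sum>s<N. \<bar>Q top s - mu s\<bar> + \<bar>Q 0 s - mu s\<bar>)"
      by (rule sum_mono) linarith
    also have "\<dots> = (\<Sum>s<N. \<bar>Q top s - mu s\<bar>) + (\<Sum>s<N. \<bar>Q 0 s - mu s\<bar>)" by (simp add: sum.distrib)
    also have "\<dots> = 2 * (\<Sum>s<N. \<bar>Q top s - mu s\<bar>)" using tv_minus unfolding Q_def top_def by simp
    also have "\<dots> = 4 * tv_from_plus n E J T" unfolding tv_from_plus_def Q_def top_def by simp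
    also have "\<dots> \<le> 1" using tvT by simp
    finally show "(\<Sum>s<N. \<bar>Q top s - Q 0 s\<bar>) \<le> 1" .
  qed (use D0 in simp)
  finally show ?thesis using step1 by simp
qed

lemma contract_iter:
  assumes tvT: "tv_from_plus n E J T \<le> 1/4"
  shows "incr n h \<Longrightarrow> (\<And>y y'. y < N \<Longrightarrow> y' < N \<Longrightarrow> h y - h y' \<le> D) \<Longrightarrow> x < N \<Longrightarrow> x' < N \<Longrightarrow>
    ((Pop^^T)^^k) h x - ((Pop^^T)^^k) h x' \<le> D / 2^k"
proof (induction k arbitrary: h D x x')
  case 0 then show ?case by simp
next
  case (Suc k)
  have i: "incr n ((Pop^^T) h)" by (rule iter_incr[OF Suc.prems(1)])
  have d: "(Pop^^T) h y - (Pop^^T) h y' \<le> D / 2" if "y < N" "y' < N" for y y'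
    by (rule contract_incr[OF tvT Suc.prems(1) Suc.prems(2) that])
  have "((Pop^^T)^^k) ((Pop^^T) h) x - ((Pop^^T)^^k) ((Pop^^T) h) x' \<le> (D/2) / 2^k"
    by (rule Suc.IH[OF i d Suc.prems(3,4)])
  then show ?case by (simp add: funpow_Suc_right del: funpow.simps)
qed

definition pc :: "nat \<Rightarrow> nat" where "pc y = card {w. w < n \<and> bit y w}"

lemma pc_le: "pc y \<le> n"
proof -
  have "card {w. w < n \<and> bit y w} \<le> card {..<n}" by (rule card_mono) auto
  then show ?thesis unfolding pc_def by simp
qed

lemma pc_mono: "cle n x y \<Longrightarrow> pc x \<le> pc y"
  unfolding pc_def cle_def by (rule card_mono) auto

lemma pc_strict: "cle n x y \<Longrightarrow> x < N \<Longrightarrow> y < N \<Longrightarrow> x \<noteq> y \<Longrightarrow> pc x + 1 \<le> pc y"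
proof -
  assume c: "cle n x y" and x: "x < N" and y: "y < N" and ne: "x \<noteq> y"
  obtain w where w: "w < n" "bit x w \<noteq> bit y w" using bits_eq[OF x y] ne by blast
  have "{w. w < n \<and> bit x w} \<subset> {w. w < n \<and> bit y w}" using c w unfolding cle_def by auto
  moreover have fin: "finite {w. w < n \<and> bit y w}" by simp
  ultimately have "card {w. w < n \<and> bit x w} < card {w. w < n \<and> bit y w}" using psubset_card_mono by blast
  then show ?thesis unfolding pc_def by simp
qed

lemma key_bound:
  assumes tvT: "tv_from_plus n E J T \<le> 1/4"
    and eig: "\<And>x. x < N \<Longrightarrow> Pop f x = lam * f x"
    and a: "a < N" and b: "b < N" and fab: "f a > f b" and lam: "lam > 0"
  shows "2 * lam^T \<le> 1"
proof (rule ccontr)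
  assume "\<not> 2 * lam^T \<le> 1"
  then have big: "2 * lam^T > 1" by simp
  define B0 where "B0 = Max ((\<lambda>y. \<bar>f y\<bar>) ` {..<N})"
  have fB: "\<bar>f y\<bar> \<le> B0" if "y < N" for y unfolding B0_def using that by (intro Max_ge) auto
  define K where "K = 2 * B0 + 1"
  have K0: "K \<ge> 1" unfolding K_def using fB[OF a] by simp
  define g1 where "g1 y = K * real (pc y)" for y
  define g2 where "g2 y = g1 y - f y" for y
  have fg: "f = (\<lambda>y. g1 y - g2 y)" unfolding g2_def by simp
  have i1: "incr n g1" unfolding incr_def g1_def
    using K0 pc_mono by (auto intro!: mult_left_mono)
  have i2: "incr n g2" unfolding incr_def
  proof (intro allI impI)
    fix x y assume x: "x < N" and y: "y < N" and c: "cle n x y"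
    show "g2 x \<le> g2 y"
    proof (cases "x = y")
      case False
      have "real (pc x) + 1 \<le> real (pc y)" using pc_strict[OF c x y False] by linarith
      then have "K * (real (pc x) + 1) \<le> K * real (pc y)" using K0 by (intro mult_left_mono) auto
      moreover have "f y - f x \<le> 2 * B0" using fB[OF x] fB[OF y] by linarith
      ultimately show ?thesis unfolding g2_def g1_def K_def by (simp add: algebra_simps)
    qed simp
  qed
  define D1 where "D1 = K * real n"
  define D2 where "D2 = K * real n + 2 * B0"
  have d1: "g1 y - g1 y' \<le> D1" if "y < N" "y' < N" for y y'
  proof -
    have "real (pc y) \<le> real n" using pc_le by simp
    then have "K * real (pc y) \<le> K * real n" using K0 by (intro mult_left_mono) auto
    moreover have "0 \<le> K * real (pc y')" using K0 by simp
    ultimately show ?thesis unfolding g1_def D1_def by linarith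
  qed
  have d2: "g2 y - g2 y' \<le> D2" if "y < N" "y' < N" for y y'
    using d1[OF that] fB[OF that(1)] fB[OF that(2)] unfolding g2_def D2_def D1_def by linarith
  define c where "c = lam^T"
  have cpos: "c > 0" unfolding c_def using lam by simp
  have bound: "(2*c)^k \<le> (D1 + D2) / (f a - f b)" for k
  proof -
    have it: "((Pop^^T)^^k) f x = c^k * f x" if "x < N" for x
      unfolding funpow_mult c_def using iter_eig[OF eig that] by (simp add: power_mult)
    have "c^k * (f a - f b) = ((Pop^^T)^^k) f a - ((Pop^^T)^^k) f b" using it a b by (simp add: algebra_simps)
    also have "\<dots> = (((Pop^^T)^^k) g1 a - ((Pop^^T)^^k) g1 b) - (((Pop^^T)^^k) g2 a - ((Pop^^T)^^k) g2 b)"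
      unfolding fg funpow_mult iter_diff by simp
    also have "\<dots> \<le> D1 / 2^k + D2 / 2^k"
      using contract_iter[OF tvT i1 d1 a b, of k] contract_iter[OF tvT i2 d2 b a, of k] by linarith
    finally have "c^k * (f a - f b) \<le> (D1 + D2) / 2^k" by (simp add: add_divide_distrib)
    then have "c^k * (f a - f b) * 2^k \<le> D1 + D2" by (simp add: pos_le_divide_eq)
    then have "(2*c)^k * (f a - f b) \<le> D1 + D2" by (simp add: power_mult_distrib mult_ac)
    then show ?thesis using fab by (simp add: pos_le_divide_eq)
  qed
  obtain k where "(D1 + D2) / (f a - f b) < (2*c)^k" using real_arch_pow[of "2*c"] big unfolding c_def by blast
  then show False using bound[of k] by simp
qed

lemma M_ones: "M *\<^sub>v vec N (\<lambda>_. 1) = 1 \<cdot>\<^sub>v vec N (\<lambda>_. 1)"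
proof (rule eq_vecI)
  fix i assume "i < dim_vec (1 \<cdot>\<^sub>v vec N (\<lambda>_. (1::real)))"
  then have i: "i < N" by simp
  have "(M *\<^sub>v vec N (\<lambda>_. 1)) $ i = row M i \<bullet> vec N (\<lambda>_. 1)"
    using i M_carrier by simp
  also have "\<dots> = (\<Sum>k<N. P i k)"
    unfolding scalar_prod_def using i M_carrier by (auto simp: M_index atLeast0LessThan intro!: sum.cong)
  also have "\<dots> = 1" using row_sum[OF i] .
  finally show "(M *\<^sub>v vec N (\<lambda>_. 1)) $ i = (1 \<cdot>\<^sub>v vec N (\<lambda>_. (1::real))) $ i" using i by simp
qed (use M_carrier in simp)

lemma root1: "poly (char_poly M) 1 = 0"
proof -
  have "eigenvector M (vec N (\<lambda>_. 1)) 1"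
    unfolding eigenvector_def
  proof (intro conjI)
    show "vec N (\<lambda>_. 1) \<in> carrier_vec (dim_row M)" using M_carrier by simp
    show "vec N (\<lambda>_. (1::real)) \<noteq> 0\<^sub>v (dim_row M)"
    proof
      assume "vec N (\<lambda>_. (1::real)) = 0\<^sub>v (dim_row M)"
      then have "vec N (\<lambda>_. (1::real)) $ 0 = 0\<^sub>v (dim_row M) $ 0" by simp
      then show False using M_carrier by simp
    qed
    show "M *\<^sub>v vec N (\<lambda>_. 1) = 1 \<cdot>\<^sub>v vec N (\<lambda>_. 1)" by (rule M_ones)
  qed
  then have "eigenvalue M 1" unfolding eigenvalue_def by blast
  then show ?thesis using eigenvalue_root_char_poly[OF M_carrier] by simp
qed

end

lemma odd_root:
  fixes q :: "real poly"
  assumes od: "odd (degree q)" and lc: "lead_coeff q > 0"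
  shows "\<exists>r. poly q r = 0"
proof -
  obtain X1 where X1: "\<forall>x\<ge>X1. poly q x \<ge> lead_coeff q" using poly_pinfty_gt_lc[OF lc] by blast
  define q2 where "q2 = - (q \<circ>\<^sub>p [:0, -1:])"
  have dq: "degree [:0, -1::real:] = 1" by simp
  have "lead_coeff (q \<circ>\<^sub>p [:0, -1:]) = lead_coeff q * (-1) ^ degree q"
    using lead_coeff_comp[of "[:0, -1::real:]" q] dq by simp
  also have "\<dots> = - lead_coeff q" using od by simp
  finally have "lead_coeff q2 = lead_coeff q" unfolding q2_def by simp
  then obtain X2 where X2: "\<forall>x\<ge>X2. poly q2 x \<ge> lead_coeff q" using poly_pinfty_gt_lc[of q2] lc by auto
  define R where "R = \<bar>X1\<bar> + \<bar>X2\<bar> + 1"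
  have "poly q R > 0" using X1 lc unfolding R_def by (smt (verit))
  moreover have "poly q2 R > 0" using X2 lc unfolding R_def by (smt (verit))
  then have "poly q (-R) < 0" unfolding q2_def by (simp add: poly_pcompose)
  moreover have "-R < R" unfolding R_def by simp
  ultimately show ?thesis using poly_IVT_pos[of "-R" R q] by blast
qed

lemma numeric:
  fixes lam :: real and T :: nat
  assumes l0: "0 < lam" and l1: "lam < 1" and h: "2 * lam^T \<le> 1"
  shows "real T \<ge> ln 2 * (1 / (1 - lam) - 1)"
proof -
  have "ln (lam^T) \<le> ln (1/2)" using h l0 by (subst ln_le_cancel_iff) auto
  then have a: "real T * ln lam \<le> - ln 2" using l0 by (simp add: ln_realpow ln_div)
  have "ln (1/lam) \<le> 1/lam - 1" using l0 by (intro ln_le_minus_one) simp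
  then have b: "ln lam \<ge> 1 - 1/lam" using l0 by (simp add: ln_div)
  have "real T * (1 - 1/lam) \<le> real T * ln lam" using b by (intro mult_left_mono) auto
  with a have c: "ln 2 \<le> real T * (1/lam - 1)" by (simp add: algebra_simps)
  have e: "1/lam - 1 = (1 - lam) / lam" using l0 by (simp add: field_simps)
  have "ln 2 * lam \<le> real T * (1 - lam)" using c l0 unfolding e by (simp add: field_simps)
  then have "ln 2 * lam / (1 - lam) \<le> real T" using l1 by (simp add: divide_simps mult_ac)
  moreover have "1 / (1 - lam) - 1 = lam / (1 - lam)" using l1 by (simp add: field_simps)
  ultimately show ?thesis by simp
qed


theorem lemma2p1:
  fixes n :: nat and E :: "nat set set" and J :: "nat set \<Rightarrow> real"
  assumes "n \<ge> 1"
    and "E \<subseteq> graph_edges n"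
    and "\<forall>e\<in>E. J e \<ge> 0"
  shows "real (tmix_plus n E J) \<ge> ln 2 * (1 / spectral_gap n E J - 1)"
proof -
  interpret I: ising n E J using assms by unfold_locales auto
  let ?M = "glauber_mat n E J"
  define cp where "cp = char_poly ?M"
  have deg: "degree cp = 2^n \<and> coeff cp (2^n) = 1"
    unfolding cp_def using degree_monic_char_poly[OF I.M_carrier] .
  have cp0: "cp \<noteq> 0" using deg by auto
  have "[:-1, 1:] dvd cp" using I.root1 poly_eq_0_iff_dvd[of cp 1] unfolding cp_def by simp
  then obtain q where q: "cp = [:-1,1:] * q" by (rule dvdE)
  have q0: "q \<noteq> 0" using cp0 q by auto
  have l0: "[:-1,1::real:] \<noteq> 0" by simp
  have dq: "degree cp = 1 + degree q" unfolding q by (simp only: degree_mult_eq[OF l0 q0]) simp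
  have "lead_coeff cp = lead_coeff [:-1,1::real:] * lead_coeff q" unfolding q by (rule lead_coeff_mult)
  moreover have "lead_coeff cp = 1" using deg by simp
  ultimately have lq: "lead_coeff q = 1" by simp
  have "even ((2::nat)^n)" using assms(1) by simp
  then have "even (1 + degree q)" using dq deg by metis
  then have od: "odd (degree q)" by simp
  obtain r where r: "poly q r = 0" using odd_root[OF od] lq by auto
  have "proots cp = proots [:-1,1:] + proots q" unfolding q by (rule proots_mult[OF l0 q0])
  also have "proots [:-1,1::real:] = {#1#}" using proots_linear_factor[of "-1::real"] by simp
  finally have pc: "proots cp = {#1#} + proots q" .
  have "r \<in># proots q" using r q0 by simp
  then have "size (proots q) \<ge> 1" by (metis One_nat_def Suc_leI nonempty_has_size size_eq_0_iff_empty empty_iff set_mset_empty neq0_conv)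
  then have sz: "size (proots cp) \<ge> 2" unfolding pc by simp
  define xs where "xs = rev (sorted_list_of_multiset (proots cp))"
  have len: "length xs = size (proots cp)"
    unfolding xs_def by (metis length_rev mset_sorted_list_of_multiset size_mset)
  define lam where "lam = xs ! 1"
  have "lam \<in> set xs" unfolding lam_def using len sz by (intro nth_mem) simp
  then have root: "poly cp lam = 0" using cp0 unfolding xs_def by simp
  have gap: "spectral_gap n E J = 1 - lam"
    by (simp add: spectral_gap_def second_largest_eigenvalue_def lam_def xs_def cp_def)
  show ?thesis
  proof (cases "0 < lam \<and> lam < 1")
    case False
    have "ln 2 * (1/(1-lam) - 1) \<le> 0"
    proof (cases "lam \<le> 0")
      case True
      then have "1/(1-lam) \<le> 1" by (simp add: divide_simps)
      then show ?thesis by (simp add: mult_nonneg_nonpos)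
    next
      case False
      then have "lam \<ge> 1" using \<open>\<not> (0 < lam \<and> lam < 1)\<close> by linarith
      then have "1/(1-lam) \<le> 0" by (simp add: divide_simps)
      then have "1/(1-lam) - 1 \<le> 0" by linarith
      then show ?thesis by (intro mult_nonneg_nonpos) auto
    qed
    then show ?thesis unfolding gap by (smt (verit) of_nat_0_le_iff)
  next
    case True
    have "eigenvalue ?M lam" using eigenvalue_root_char_poly[OF I.M_carrier] root cp_def by simp
    then obtain v where ev: "eigenvector ?M v lam" unfolding eigenvalue_def by blast
    have vc: "v \<in> carrier_vec (2^n)" and vnz: "v \<noteq> 0\<^sub>v (2^n)" and Mv: "?M *\<^sub>v v = lam \<cdot>\<^sub>v v"
      using ev I.M_carrier unfolding eigenvector_def by auto
    define f where "f y = v $ y" for y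
    have eig: "I.Pop f x = lam * f x" if x: "x < 2^n" for x
    proof -
      have "(?M *\<^sub>v v) $ x = row ?M x \<bullet> v" using x I.M_carrier by simp
      also have "\<dots> = I.Pop f x"
        unfolding scalar_prod_def I.Pop_def f_def using x I.M_carrier vc
        by (auto simp: I.M_index atLeast0LessThan intro!: sum.cong)
      finally have "I.Pop f x = (lam \<cdot>\<^sub>v v) $ x" using Mv by simp
      then show ?thesis using x vc unfolding f_def by simp
    qed
    obtain a where a: "a < 2^n" "f a \<noteq> 0"
    proof (rule ccontr)
      assume "\<not> thesis"
      then have "\<forall>a<2^n. f a = 0" using that by blast
      then have "v = 0\<^sub>v (2^n)" using vc unfolding f_def by (intro eq_vecI) auto
      then show False using vnz by simp
    qed
    obtain b where b: "b < 2^n" "f b \<noteq> f a"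
    proof (rule ccontr)
      assume "\<not> thesis"
      then have cst: "\<forall>b<2^n. f b = f a" using that by blast
      have "I.Pop f a = I.Pop (\<lambda>_. f a) a" by (rule I.Pop_cong) (use cst in auto)
      also have "\<dots> = f a" by (rule I.Pop_const[OF a(1)])
      finally have "lam * f a = f a" using eig[OF a(1)] by simp
      then have "lam = 1" using a(2) by simp
      then show False using True by simp
    qed
    define T where "T = tmix_plus n E J"
    have tvT: "tv_from_plus n E J T \<le> 1/4"
      unfolding T_def tmix_plus_def by (rule LeastI_ex[OF I.exists_tv])
    have "2 * lam^T \<le> 1"
    proof (cases "f a > f b")
      case True
      then show ?thesis using I.key_bound[OF tvT eig a(1) b(1)] \<open>0 < lam \<and> lam < 1\<close> by blast
    next
      case False
      then have "f b > f a" using b(2) by simp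
      then show ?thesis using I.key_bound[OF tvT eig b(1) a(1)] \<open>0 < lam \<and> lam < 1\<close> by blast
    qed
    then show ?thesis using numeric[of lam T] True gap unfolding T_def by simp
  qed
qed

end
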